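(* If $\kappa\ge1$ and $\phi(R)+\kappa\phi^{(s)}\le\frac\pi2$, then $\mu(\mathcal D^{(s)}(\kappa))=\Theta\big(n(\phi(R)+\kappa\phi^{(s)})\big)=\Theta(1+\kappa s^{1/(2\alpha)})$.
   Context: Fixed constants $\nu>0$, $\alpha\in(\tfrac12,1]$; $R:=2\log(n/\nu)$. Polar coordinates $(r,\theta)$ in the hyperbolic disk $B_O(R)$; $\mu$ is the measure with $d\mu=n\frac{\alpha\sinh(\alpha r)}{2\pi(\cosh(\alpha R)-1)}dr\,d\theta$. $\phi(r)\in[0,\pi/2]$ is defined for $r\in[0,R]$ by $\cos\phi(r)=\coth R\tanh(r/2)$ (decreasing bijection onto $[\phi(R),\pi/2]$). $\phi^{(s)}:=(s^{1/\alpha}/e^R)^{1/2}$, $\varepsilon(\kappa,s):=\frac{1+s}{(1+\kappa s^{1/(2\alpha)})^{2\alpha}}$. For $\phi(R)\le|\theta_0|<\pi/2$, $\mathfrak r_0:=\phi^{-1}(|\theta_0|)$ and $\tilde{\mathfrak r}_0\in[\mathfrak r_0,R]$ is the unique value with $\frac{\log(\tanh(\alpha R/2)/\tanh(\alpha\tilde{\mathfrak r}_0/2))}{\log(\tanh(\alpha R/2)/\tanh(\alpha\mathfrak r_0/2))}=\varepsilon(\kappa,s)$. $\mathcal D^{(s)}(\kappa):=\{(r_0,\theta_0)\in B_O(R):|\theta_0|\le\frac\pi2\text{ and }(|\theta_0|\le\phi(R)+\kappa\phi^{(s)}\text{ or }r_0\le\tilde{\mathfrak r}_0)\}$. $s=s(n)>0$;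 asymptotics as $n\to\infty$. *)

theory Defs
  imports "HOL-Analysis.Analysis" "HOL-Library.Landau_Symbols"
begin

definition hypR :: "real \<Rightarrow> nat \<Rightarrow> real" where
  "hypR \<nu> n = 2 * ln (real n / \<nu>)"

definition phi :: "real \<Rightarrow> real \<Rightarrow> real" where
  "phi R r = arccos ((cosh R / sinh R) * tanh (r / 2))"

definition phi_s :: "real \<Rightarrow> real \<Rightarrow> real \<Rightarrow> real" where
  "phi_s \<alpha> R s = sqrt (s powr (1 / \<alpha>) / exp R)"

definition eps :: "real \<Rightarrow> real \<Rightarrow> real \<Rightarrow> real" where
  "eps \<alpha> \<kappa> s = (1 + s) / (1 + \<kappa> * s powr (1 / (2 * \<alpha>))) powr (2 * \<alpha>)"

definition rr0 :: "real \<Rightarrow> real \<Rightarrow> real" where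
  "rr0 R \<theta> = (THE r. 0 \<le> r \<and> r \<le> R \<and> phi R r = \<bar>\<theta>\<bar>)"

definition rr0_tilde :: "real \<Rightarrow> real \<Rightarrow> real \<Rightarrow> real \<Rightarrow> real \<Rightarrow> real" where
  "rr0_tilde \<alpha> R \<kappa> s \<theta> = (THE r. rr0 R \<theta> \<le> r \<and> r \<le> R \<and>
      ln (tanh (\<alpha> * R / 2) / tanh (\<alpha> * r / 2)) /
      ln (tanh (\<alpha> * R / 2) / tanh (\<alpha> * rr0 R \<theta> / 2)) = eps \<alpha> \<kappa> s)"

text \<open>The disk B_O(R) in polar coordinates (r, theta), theta in (-pi, pi].\<close>
definition polar_disk :: "real \<Rightarrow> (real \<times> real) set" where
  "polar_disk R = {(r, \<theta>). 0 \<le> r \<and> r \<le> R \<and> - pi < \<theta> \<and> \<theta> \<le> pi}"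

definition mu_meas :: "real \<Rightarrow> real \<Rightarrow> nat \<Rightarrow> (real \<times> real) measure" where
  "mu_meas \<nu> \<alpha> n = density lborel (\<lambda>(r, \<theta>).
      if (r, \<theta>) \<in> polar_disk (hypR \<nu> n)
      then ennreal (real n * \<alpha> * sinh (\<alpha> * r) /
                    (2 * pi * (cosh (\<alpha> * hypR \<nu> n) - 1)))
      else 0)"

definition D_s :: "real \<Rightarrow> real \<Rightarrow> nat \<Rightarrow> real \<Rightarrow> real \<Rightarrow> (real \<times> real) set" where
  "D_s \<nu> \<alpha> n \<kappa> s = (let R = hypR \<nu> n in
     {(r, \<theta>) \<in> polar_disk R. \<bar>\<theta>\<bar> \<le> pi / 2 \<and>
        (\<bar>\<theta>\<bar> \<le> phi R R + \<kappa> * phi_s \<alpha> R s \<or>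
         (phi R R \<le> \<bar>\<theta>\<bar> \<and> \<bar>\<theta>\<bar> < pi / 2 \<and> r \<le> rr0_tilde \<alpha> R \<kappa> s \<theta>))})"

end

theory Submission
  imports Defs
begin

lemma cos_lower: fixes x :: real assumes "0 \<le> x" shows "1 - x^2/2 \<le> cos x"
proof -
  have "(\<lambda>t. cos t - 1 + t^2/2) 0 \<le> (\<lambda>t. cos t - 1 + t^2/2) x"
  proof (rule DERIV_nonneg_imp_nondecreasing[OF assms])
    fix t assume t0: "0 \<le> t" and t1: "t \<le> x"
    note t = t0 t1
    show "\<exists>y. ((\<lambda>t. cos t - 1 + t^2/2) has_real_derivative y) (at t) \<and> 0 \<le> y"
      by (rule exI[of _ "- sin t + t"]) (use t sin_x_le_x[of t] in \<open>auto intro!: derivative_eq_intros\<close>)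
  qed
  then show ?thesis by simp
qed

lemma sin_lower: fixes x :: real assumes "0 \<le> x" shows "x - x^3/6 \<le> sin x"
proof -
  have "(\<lambda>t. sin t - t + t^3/6) 0 \<le> (\<lambda>t. sin t - t + t^3/6) x"
  proof (rule DERIV_nonneg_imp_nondecreasing[OF assms])
    fix t assume t0: "0 \<le> t" and t1: "t \<le> x"
    note t = t0 t1
    show "\<exists>y. ((\<lambda>t. sin t - t + t^3/6) has_real_derivative y) (at t) \<and> 0 \<le> y"
      by (rule exI[of _ "cos t - 1 + t^2/2"]) (use t cos_lower[of t] in \<open>auto intro!: derivative_eq_intros\<close>)
  qed
  then show ?thesis by simp
qed

lemma one_minus_cos_lower: fixes x :: real assumes "\<bar>x\<bar> \<le> pi/2" shows "x^2/4 \<le> 1 - cos x"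
proof -
  have pi4: "pi < 4" by (rule pi_less_4)
  have A: "(\<lambda>t. 1 - cos t - t^2/4) 0 \<le> (\<lambda>t. 1 - cos t - t^2/4) \<bar>x\<bar>"
  proof (rule DERIV_nonneg_imp_nondecreasing[of 0 "\<bar>x\<bar>" "\<lambda>t. 1 - cos t - t^2/4"])
    fix t assume t0: "0 \<le> t" and t1: "t \<le> \<bar>x\<bar>"
    note t = t0 t1
    have "t^2 \<le> 3"
    proof -
      have "pi \<le> 3.2" using pi_approx(2) by simp
      then have "t \<le> 1.6" using t assms by linarith
      then have "t^2 \<le> 1.6^2" using t by (intro power_mono) auto
      thus ?thesis by (simp add: power2_eq_square)
    qed
    then have "t^3/6 \<le> t/2" using t by (simp add: power3_eq_cube power2_eq_square mult_le_cancel_left)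
    then have "0 \<le> sin t - t/2" using sin_lower[of t] t by linarith
    then show "\<exists>y. ((\<lambda>t. 1 - cos t - t^2/4) has_real_derivative y) (at t) \<and> 0 \<le> y"
      by (intro exI[of _ "sin t - t/2"]) (auto intro!: derivative_eq_intros)
  qed simp
  then show ?thesis by simp
qed

lemma tanh_artanh: fixes x :: real assumes "\<bar>x\<bar> < 1" shows "tanh (artanh x) = x"
proof -
  have p: "(1 + x) / (1 - x) > 0" using assms by (auto simp: field_simps)
  have h: "1 + x > 0" "1 - x > 0" using assms by auto
  have "exp (2 * artanh x) = (1 + x) / (1 - x)" using p by (simp add: artanh_def)
  then have e: "exp (-2 * artanh x) = (1 - x) / (1 + x)"
    using h by (simp add: exp_minus inverse_eq_divide)
  have "1 + x > 0" "1 - x > 0" using assms by auto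
  then show ?thesis unfolding tanh_real_altdef e by (simp add: field_simps)
qed

lemma exp_artanh2: fixes x :: real assumes "\<bar>x\<bar> < 1" shows "exp (2 * artanh x) = (1 + x) / (1 - x)"
proof -
  have p: "(1 + x) / (1 - x) > 0" using assms by (auto simp: field_simps)
  show ?thesis using p by (simp add: artanh_def)
qed

lemma cosh_artanh2: fixes x :: real assumes "\<bar>x\<bar> < 1" shows "cosh (2 * artanh x) - 1 = 2 * x^2 / (1 - x^2)"
proof -
  have e: "exp (2 * artanh x) = (1 + x) / (1 - x)" by (rule exp_artanh2[OF assms])
  have e2: "exp (-(2 * artanh x)) = (1 - x) / (1 + x)" unfolding exp_minus e using assms by (simp add: field_simps)
  have h: "1 + x > 0" "1 - x > 0" using assms by auto
  have "1 - x^2 > 0" using assms abs_square_less_1[of x] by simp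
  then show ?thesis unfolding cosh_def e e2 using h by (simp add: field_simps power2_eq_square)
qed

lemma aux_v: fixes v :: real assumes v: "v > 1"
  shows "(v^2 + 1) / (2 * v) / ((v^2 - 1) / (2 * v)) * ((v - 1) / (v + 1)) = (v^2 + 1) / (2 * v) / ((v^2 + 1) / (2 * v) + 1)"
proof -
  have v0: "v > 0" "v - 1 > 0" "v + 1 > 0" using v by auto
  have f: "v^2 - 1 = (v - 1) * (v + 1)" by (simp add: algebra_simps power2_eq_square)
  have g: "v^2 + 1 + 2 * v = (v + 1) * (v + 1)" by (simp add: algebra_simps power2_eq_square)
  have "(v^2 + 1) / (2 * v) / ((v^2 - 1) / (2 * v)) = (v^2 + 1) / (v^2 - 1)" using v0 by simp
  also have "\<dots> * ((v - 1) / (v + 1)) = (v^2 + 1) / ((v + 1) * (v + 1))" unfolding f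
  proof -
    have "(v^2 + 1) / ((v - 1) * (v + 1)) * ((v - 1) / (v + 1)) = ((v^2 + 1) * (v - 1)) / (((v - 1) * (v + 1)) * (v + 1))"
      by (rule times_divide_times_eq)
    also have "\<dots> = ((v - 1) * (v^2 + 1)) / ((v - 1) * ((v + 1) * (v + 1)))" by (simp add: ac_simps)
    also have "\<dots> = (v^2 + 1) / ((v + 1) * (v + 1))" using v0 by (intro mult_divide_mult_cancel_left) auto
    finally show "(v^2 + 1) / ((v - 1) * (v + 1)) * ((v - 1) / (v + 1)) = (v^2 + 1) / ((v + 1) * (v + 1))" .
  qed
  finally have L: "(v^2 + 1) / (2 * v) / ((v^2 - 1) / (2 * v)) * ((v - 1) / (v + 1)) = (v^2 + 1) / ((v + 1) * (v + 1))" by simp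
  have "(v^2 + 1) / (2 * v) + 1 = (v^2 + 1 + 2 * v) / (2 * v)" using v0 by (simp add: field_simps)
  then have "(v^2 + 1) / (2 * v) / ((v^2 + 1) / (2 * v) + 1) = (v^2 + 1) / (v^2 + 1 + 2 * v)" using v0 by simp
  then show ?thesis unfolding L g by (rule sym)
qed

lemma coth_tanh_half: fixes R :: real assumes "R > 0"
  shows "cosh R / sinh R * tanh (R/2) = cosh R / (cosh R + 1)"
proof -
  define u where "u = exp (R/2)"
  have u: "u > 1" using assms by (simp add: u_def)
  have eR: "exp R = u^2" by (simp add: u_def power2_eq_square flip: exp_add)
  have emR: "exp (-R) = 1/u^2" by (simp add: exp_minus eR inverse_eq_divide)
  have emR2: "exp (-(R/2)) = 1/u" by (simp add: exp_minus u_def inverse_eq_divide)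
  have "sinh R > 0" using assms by simp
  have u2: "u^2 - 1 > 0" using one_less_power[OF u, of 2] by simp
  have u4: "u^4 - 1 > 0" using one_less_power[OF u, of 4] by simp
  have t: "tanh (R/2) = (u^2 - 1) / (u^2 + 1)" unfolding tanh_def cosh_def sinh_def emR2 u_def[symmetric]
    apply (simp only: real_scaleR_def)
  proof -
    have uu: "u * u > 0" "u > 0" "u + u*(u*u) > 0" "1 + u * u > 0" using u by (auto simp: add_pos_pos)
    have "(u - 1/u) / (u + 1/u) = (u*u - 1) / (u*u + 1)" using uu
      by (simp add: field_simps)
    moreover have "inverse 2 * (u - 1 / u) / (inverse 2 * (u + 1 / u)) = (u - 1/u)/(u + 1/u)"
      by (rule mult_divide_mult_cancel_left) simp
    ultimately show "inverse 2 * (u - 1 / u) / (inverse 2 * (u + 1 / u)) = (u^2 - 1) / (u^2 + 1)" by (simp only: power2_eq_square)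
  qed
  have c: "cosh R = (u^4 + 1) / (2 * u^2)" unfolding cosh_def eR emR using u
    by (simp add: field_simps power2_eq_square power4_eq_xxxx)
  have s: "sinh R = (u^4 - 1) / (2 * u^2)" unfolding sinh_def eR emR using u
    by (simp add: field_simps power2_eq_square power4_eq_xxxx)
  have "u^4 - 1 = (u^2 - 1) * (u^2 + 1)" by (simp add: algebra_simps power2_eq_square power4_eq_xxxx)
  have q: "(u^2)^2 = u^4" by simp
  have "u^2 > 1" using u2 by simp
  from aux_v[OF this] show ?thesis unfolding t c s q .
qed

lemma cos_le_sq: fixes x :: real shows "1 - cos x \<le> x^2/2"
  using cos_lower[of "\<bar>x\<bar>"] by simp

lemma phiRR_cos: fixes R :: real assumes "R > 0"
  shows "cos (phi R R) = cosh R / (cosh R + 1)" "0 \<le> phi R R" "phi R R \<le> pi/2"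
proof -
  have c: "cosh R / sinh R * tanh (R/2) = cosh R / (cosh R + 1)" by (rule coth_tanh_half[OF assms])
  have ch: "cosh R \<ge> 1" by (rule cosh_real_ge_1)
  have a0: "0 \<le> cosh R / (cosh R + 1)" "cosh R / (cosh R + 1) \<le> 1" using ch by (auto simp: field_simps)
  show "cos (phi R R) = cosh R / (cosh R + 1)" unfolding phi_def c using a0 by (intro cos_arccos) linarith+
  show "0 \<le> phi R R" unfolding phi_def c using a0 by (intro arccos_lbound) linarith+
  show "phi R R \<le> pi/2" unfolding phi_def c using a0 by (intro arccos_le_pi2) linarith+
qed

lemma phiRR_bounds: fixes R :: real assumes "R > 0"
  shows "exp (-R/2) \<le> phi R R" "phi R R \<le> 3 * exp (-R/2)"
proof -
  note P = phiRR_cos[OF assms]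
  define p where "p = phi R R"
  have cp: "cosh R + 1 > 0" using cosh_real_ge_1[of R] by linarith
  have d: "1 - cos p = 1 / (cosh R + 1)" unfolding p_def P(1) using cp
    by (simp add: field_simps)
  have em: "exp (-R) \<le> 1" "1 \<le> exp R" "0 < exp (-R)" using assms by auto
  have ch1: "cosh R + 1 \<le> 2 * exp R" unfolding cosh_def real_scaleR_def by (simp add: field_simps) (use em in linarith)
  have ch2: "exp R / 2 \<le> cosh R + 1" unfolding cosh_def real_scaleR_def using em by (simp add: field_simps)
  have eR: "exp R = exp (R/2)^2" by (simp add: power2_eq_square flip: exp_add)
  have "2 / (2 * exp R) \<le> 2 / (cosh R + 1)"
    using ch1 cp by (intro divide_left_mono) auto
  also have "\<dots> = 1 / (cosh R + 1) * 2" by simp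
  also have "\<dots> \<le> p^2" using cos_le_sq[of p] d by simp
  finally have A: "2 / (2 * exp R) \<le> p^2" .
  have e1: "exp (-R/2)^2 = exp (-R)" by (simp add: power2_eq_square flip: exp_add)
  have e2: "exp (-R) = 2 / (2 * exp R)" by (simp add: exp_minus inverse_eq_divide)
  have "exp (-R/2)^2 \<le> p^2" unfolding e1 e2 by (rule A)
  then show "exp (-R/2) \<le> phi R R" unfolding p_def using P(2) by (rule power2_le_imp_le)
  have "p^2/4 \<le> 1 - cos p" by (rule one_minus_cos_lower) (use P in \<open>simp add: p_def\<close>)
  then have "p^2 \<le> 4 / (cosh R + 1)" using d by simp
  also have "\<dots> \<le> 4 / (exp R / 2)" using ch2 cp by (intro divide_left_mono) auto
  also have "\<dots> = 8 * exp (-R)" by (simp add: exp_minus inverse_eq_divide)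
  also have "\<dots> \<le> 9 * exp (-R)" by simp
  also have "\<dots> = (3 * exp (-R/2))^2" unfolding power_mult_distrib e1 by simp
  finally show "phi R R \<le> 3 * exp (-R/2)" unfolding p_def by (rule power2_le_imp_le) simp
qed

lemma tanhR_pos: fixes R :: real assumes "R > 0" shows "0 < tanh R" "tanh R < 1"
  using assms tanh_real_lt_1 by auto

lemma coth_tanh: fixes R :: real assumes "R > 0" shows "cosh R / sinh R * tanh R = 1"
proof -
  have "sinh R > 0" "cosh R > 0" using assms by auto
  then show ?thesis unfolding tanh_def by simp
qed

lemma rr0_eq: fixes R \<theta> :: real
  assumes R: "R > 0" and th1: "phi R R \<le> \<bar>\<theta>\<bar>" and th2: "\<bar>\<theta>\<bar> \<le> pi/2"
  shows "rr0 R \<theta> = 2 * artanh (cos \<theta> * tanh R)"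
    and "0 \<le> 2 * artanh (cos \<theta> * tanh R)" "2 * artanh (cos \<theta> * tanh R) \<le> R"
    and "phi R (2 * artanh (cos \<theta> * tanh R)) = \<bar>\<theta>\<bar>"
proof -
  define x where "x = cos \<theta> * tanh R"
  define K where "K = cosh R / sinh R"
  note P = phiRR_cos[OF R]
  have K0: "K > 0" unfolding K_def using R by simp
  have KT: "K * tanh R = 1" unfolding K_def by (rule coth_tanh[OF R])
  have KT2: "K * tanh (R/2) = cosh R / (cosh R + 1)" unfolding K_def by (rule coth_tanh_half[OF R])
  have c0: "0 \<le> cos \<theta>" using th2 by (intro cos_ge_zero) auto
  have cabs: "cos \<theta> = cos \<bar>\<theta>\<bar>" by (simp add: abs_if)
  have c1: "cos \<theta> \<le> cos (phi R R)" unfolding cabs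
    by (rule cos_monotone_0_pi_le) (use P th1 th2 in auto)
  have x0: "0 \<le> x" unfolding x_def using c0 tanhR_pos[OF R] by simp
  have "x \<le> cos (phi R R) * tanh R" unfolding x_def using c1 tanhR_pos[OF R] by (intro mult_right_mono) auto
  also have "\<dots> = tanh (R/2)" unfolding P(1) KT2[symmetric] using KT by (simp add: algebra_simps)
  finally have xle: "x \<le> tanh (R/2)" .
  have x1: "\<bar>x\<bar> < 1" using x0 xle tanh_real_lt_1[of "R/2"] by simp
  have tx: "tanh (2 * artanh x / 2) = x" using tanh_artanh[OF x1] by simp
  show nn: "0 \<le> 2 * artanh (cos \<theta> * tanh R)" using tx x0 unfolding x_def[symmetric]
    by (metis tanh_real_nonneg_iff nonzero_mult_div_cancel_left zero_neq_numeral mult_nonneg_nonneg zero_le_numeral)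
  have "tanh (2 * artanh x / 2) \<le> tanh (R/2)" using tx xle by simp
  then show le: "2 * artanh (cos \<theta> * tanh R) \<le> R" unfolding x_def[symmetric] tanh_real_le_iff by simp
  have ph: "phi R (2 * artanh x) = \<bar>\<theta>\<bar>"
  proof -
    have Kx: "K * x = cos \<theta>" unfolding x_def using KT by (metis mult.left_commute mult.right_neutral)
    have "K * tanh (2 * artanh x / 2) = cos \<theta>" using tx Kx by simp
    then show ?thesis unfolding phi_def K_def[symmetric] using th2 by (simp add: arccos_cos_eq_abs)
  qed
  then show "phi R (2 * artanh (cos \<theta> * tanh R)) = \<bar>\<theta>\<bar>" by (simp add: x_def)
  show "rr0 R \<theta> = 2 * artanh (cos \<theta> * tanh R)" unfolding rr0_def x_def[symmetric]
  proof (rule the_equality)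
    show "0 \<le> 2 * artanh x \<and> 2 * artanh x \<le> R \<and> phi R (2 * artanh x) = \<bar>\<theta>\<bar>"
      using nn le ph unfolding x_def by simp
  next
    fix r assume r: "0 \<le> r \<and> r \<le> R \<and> phi R r = \<bar>\<theta>\<bar>"
    have a0: "0 \<le> K * tanh (r/2)" using K0 r by simp
    have "K * tanh (r/2) \<le> K * tanh (R/2)" using K0 r by (intro mult_left_mono) auto
    also have "\<dots> \<le> 1" unfolding KT2 using cosh_real_ge_1[of R] by (simp add: field_simps)
    finally have a1: "K * tanh (r/2) \<le> 1" .
    have "arccos (K * tanh (r/2)) = arccos (cos \<theta>)" using r th2 unfolding phi_def K_def[symmetric]
      by (simp add: arccos_cos_eq_abs)
    then have "K * tanh (r/2) = cos \<theta>" using a0 a1 c0 cos_le_one[of \<theta>] by (subst (asm) arccos_eq_iff) auto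
    then have "tanh (r/2) = x" unfolding x_def using KT K0
      by (metis mult.assoc mult.commute mult_cancel_left1 mult.left_commute)
    then have "tanh (r/2) = tanh (2 * artanh x / 2)" using tx by simp
    then show "r = 2 * artanh x" by simp
  qed
qed

lemma powr_convex_bound: fixes t e :: real assumes "0 < t" "t \<le> 1" "0 < e" "e \<le> 1"
  shows "t powr e \<le> 1 - e * (1 - t)"
  using Youngs_inequality_0[of e "1 - e" t 1] assms by (simp add: algebra_simps)

definition gfun :: "real \<Rightarrow> real \<Rightarrow> real \<Rightarrow> real \<Rightarrow> real" where
  "gfun \<alpha> R e \<theta> = 2 / \<alpha> * artanh (tanh (\<alpha> * R / 2) powr (1 - e) *
      tanh (\<alpha> * (2 * artanh (cos \<theta> * tanh R)) / 2) powr e)"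

lemma r0_props: fixes R \<theta> :: real
  assumes R: "R > 0" and th1: "phi R R < \<bar>\<theta>\<bar>" and th2: "\<bar>\<theta>\<bar> < pi/2"
  shows "0 < 2 * artanh (cos \<theta> * tanh R)" "2 * artanh (cos \<theta> * tanh R) < R"
proof -
  note E = rr0_eq[OF R less_imp_le[OF th1] less_imp_le[OF th2]]
  define x where "x = cos \<theta> * tanh R"
  have c: "cos \<theta> > 0" using th2 by (intro cos_gt_zero_pi) auto
  have x0: "x > 0" unfolding x_def using c tanhR_pos[OF R] by simp
  have "x \<le> 1 * tanh R" unfolding x_def using tanhR_pos[OF R] cos_le_one[of \<theta>]
    by (intro mult_right_mono) auto
  then have x1: "x < 1" using tanhR_pos[OF R] by simp
  have "tanh (2 * artanh x / 2) = x" using tanh_artanh[of x] x0 x1 by simp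
  then have "tanh (2 * artanh x / 2) > 0" using x0 by simp
  then show "0 < 2 * artanh (cos \<theta> * tanh R)" unfolding x_def[symmetric] by simp
  show "2 * artanh (cos \<theta> * tanh R) < R"
    using E(3,4) th1 by (metis order.not_eq_order_implies_strict less_irrefl)
qed

lemma rrt_eq: fixes \<alpha> R e \<theta> \<kappa> s :: real
  assumes R: "R > 0" and a: "\<alpha> > 0" and e0: "0 < e" and e1: "e \<le> 1" and ee: "eps \<alpha> \<kappa> s = e"
    and th1: "phi R R < \<bar>\<theta>\<bar>" and th2: "\<bar>\<theta>\<bar> < pi/2"
  shows "rr0_tilde \<alpha> R \<kappa> s \<theta> = gfun \<alpha> R e \<theta>" "gfun \<alpha> R e \<theta> \<le> R" "0 \<le> gfun \<alpha> R e \<theta>"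
proof -
  note E = rr0_eq[OF R less_imp_le[OF th1] less_imp_le[OF th2]]
  note P = r0_props[OF R th1 th2]
  define r0 where "r0 = 2 * artanh (cos \<theta> * tanh R)"
  have r0: "rr0 R \<theta> = r0" "0 < r0" "r0 < R" using E(1) P unfolding r0_def by auto
  define t0 where "t0 = tanh (\<alpha> * r0 / 2)"
  define tR where "tR = tanh (\<alpha> * R / 2)"
  have t0: "0 < t0" unfolding t0_def using a r0 by simp
  have t0R: "t0 < tR" unfolding t0_def tR_def using a r0 by simp
  have tR1: "tR < 1" unfolding tR_def by (rule tanh_real_lt_1)
  define X where "X = tR powr (1 - e) * t0 powr e"
  have Xg: "gfun \<alpha> R e \<theta> = 2 / \<alpha> * artanh X" unfolding gfun_def X_def tR_def t0_def r0_def ..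
  have X0: "t0 \<le> X"
  proof -
    have "t0 = t0 powr (1 - e) * t0 powr e" using t0 by (simp flip: powr_add)
    also have "\<dots> \<le> X" unfolding X_def using t0 t0R e1 e0
      by (intro mult_right_mono powr_mono2) auto
    finally show ?thesis .
  qed
  have X1: "X \<le> tR"
  proof -
    have "X \<le> tR powr (1 - e) * tR powr e" unfolding X_def using t0 t0R e1 e0
      by (intro mult_left_mono powr_mono2) auto
    also have "\<dots> = tR" using t0 t0R by (simp flip: powr_add)
    finally show ?thesis .
  qed
  have Xb: "\<bar>X\<bar> < 1" using X0 X1 t0 tR1 by simp
  define g where "g = 2 / \<alpha> * artanh X"
  have tg: "tanh (\<alpha> * g / 2) = X" unfolding g_def using a tanh_artanh[OF Xb] by simp
  have gr0: "r0 \<le> g" using X0 tg unfolding t0_def by (metis tanh_real_le_iff a mult_le_cancel_left_pos divide_right_mono zero_le_numeral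
      mult_left_le_imp_le zero_less_numeral divide_le_cancel)
  have gR: "g \<le> R" using X1 tg unfolding tR_def by (metis tanh_real_le_iff a mult_le_cancel_left_pos divide_le_cancel zero_less_numeral)
  show "gfun \<alpha> R e \<theta> \<le> R" "0 \<le> gfun \<alpha> R e \<theta>" using gR gr0 r0 unfolding Xg g_def[symmetric] by auto
  have L0: "ln (tR / t0) > 0" using t0 t0R by simp
  have key: "tR / X = (tR / t0) powr e"
  proof -
    have "tR = tR powr (1 - e) * tR powr e" using t0 t0R by (simp flip: powr_add)
    then have "tR / X = tR powr e / t0 powr e" unfolding X_def using t0 t0R
      by (metis (no_types, lifting) mult_divide_mult_cancel_left_if powr_gt_zero less_irrefl order.strict_trans)
    also have "\<dots> = (tR / t0) powr e" using t0 t0R by (simp add: powr_divide)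
    finally show ?thesis .
  qed
  have lnkey: "ln (tR / X) = e * ln (tR / t0)" unfolding key using t0 t0R by (simp add: ln_powr)
  show "rr0_tilde \<alpha> R \<kappa> s \<theta> = gfun \<alpha> R e \<theta>" unfolding rr0_tilde_def r0(1) ee Xg g_def[symmetric]
  proof (rule the_equality)
    show "r0 \<le> g \<and> g \<le> R \<and> ln (tanh (\<alpha> * R / 2) / tanh (\<alpha> * g / 2)) / ln (tanh (\<alpha> * R / 2) / tanh (\<alpha> * r0 / 2)) = e"
      using gr0 gR L0 unfolding tg tR_def[symmetric] t0_def[symmetric] lnkey by simp
  next
    fix r assume r: "r0 \<le> r \<and> r \<le> R \<and> ln (tanh (\<alpha> * R / 2) / tanh (\<alpha> * r / 2)) / ln (tanh (\<alpha> * R / 2) / tanh (\<alpha> * r0 / 2)) = e"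
    define tr where "tr = tanh (\<alpha> * r / 2)"
    have tr0: "tr > 0" unfolding tr_def using r r0 a by simp
    have "ln (tR / tr) = e * ln (tR / t0)" using r L0 unfolding tr_def[symmetric] tR_def[symmetric] t0_def[symmetric]
      by (simp add: field_simps)
    then have "ln (tR / tr) = ln (tR / X)" using lnkey by simp
    then have "tR / tr = tR / X" using tr0 t0 X0 t0R by (subst (asm) ln_inj_iff) auto
    then have "tr = X" using tr0 t0 X0 t0R by (simp add: field_simps)
    then have "tanh (\<alpha> * r / 2) = tanh (\<alpha> * g / 2)" using tg tr_def by simp
    then show "r = g" using a by simp
  qed
qed

lemma g_bound: fixes \<alpha> R e \<theta> :: real
  assumes R: "R > 0" and a: "\<alpha> > 0" and e0: "0 < e" and e1: "e \<le> 1"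
    and th1: "phi R R < \<bar>\<theta>\<bar>" and th2: "\<bar>\<theta>\<bar> < pi/2"
  shows "cosh (\<alpha> * gfun \<alpha> R e \<theta>) - 1 \<le> 2 / (e * (\<theta>^2/8) powr \<alpha>)"
proof -
  note P = r0_props[OF R th1 th2]
  define x where "x = cos \<theta> * tanh R"
  define r0 where "r0 = 2 * artanh x"
  have r0: "0 < r0" "r0 < R" using P unfolding r0_def x_def by auto
  have c: "cos \<theta> > 0" using th2 by (intro cos_gt_zero_pi) auto
  have x0: "x > 0" unfolding x_def using c tanhR_pos[OF R] by simp
  have "x \<le> cos \<theta> * 1" unfolding x_def using c tanhR_pos[OF R]
    by (intro mult_left_mono) auto
  then have xc: "x \<le> cos \<theta>" by simp
  have "x \<le> 1 * tanh R" unfolding x_def using tanhR_pos[OF R] cos_le_one[of \<theta>]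
    by (intro mult_right_mono) auto
  then have x1: "x < 1" using tanhR_pos[OF R] by simp
  define t0 where "t0 = tanh (\<alpha> * r0 / 2)"
  define tR where "tR = tanh (\<alpha> * R / 2)"
  have t0: "0 < t0" unfolding t0_def using a r0 by simp
  have t0R: "t0 < tR" unfolding t0_def tR_def using a r0 by simp
  have tR1: "tR < 1" unfolding tR_def by (rule tanh_real_lt_1)
  define X where "X = tR powr (1 - e) * t0 powr e"
  have Xg: "\<alpha> * gfun \<alpha> R e \<theta> = 2 * artanh X" unfolding gfun_def X_def tR_def t0_def r0_def x_def using a by simp
  have X0: "0 < X" unfolding X_def using t0 t0R by simp
  have Xt: "X \<le> t0 powr e"
  proof -
    have "tR powr (1 - e) \<le> 1" using t0 t0R tR1 e1 by (intro powr_le1) auto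
    then have "tR powr (1 - e) * t0 powr e \<le> 1 * t0 powr e" using t0 by (intro mult_right_mono) auto
    then show ?thesis unfolding X_def by simp
  qed
  have "t0 powr e \<le> 1 - e * (1 - t0)" using t0 t0R tR1 e0 e1 by (intro powr_convex_bound) auto
  then have X1: "1 - X \<ge> e * (1 - t0)" using Xt by simp
  define E where "E = exp (- (\<alpha> * r0))"
  have E1: "E \<le> 1" "0 < E" unfolding E_def using a r0 by auto
  have "t0 = (1 - E) / (1 + E)" unfolding t0_def E_def tanh_real_altdef by simp
  then have "1 - t0 = 2 * E / (1 + E)" using E1 by (simp add: field_simps)
  also have "\<dots> \<ge> E" using E1 by (simp add: field_simps)
  finally have tE: "1 - t0 \<ge> E" .
  have "E = exp (- r0) powr \<alpha>" unfolding E_def powr_def by simp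
  moreover have "exp (- r0) = (1 - x) / (1 + x)" unfolding r0_def
    using exp_artanh2[of x] x0 x1 by (simp add: exp_minus)
  moreover have "(1 - x) / (1 + x) \<ge> (1 - cos \<theta>) / 2"
  proof -
    have "(1 - x) / 2 \<le> (1 - x) / (1 + x)" using x0 x1 by (intro divide_left_mono) auto
    moreover have "(1 - cos \<theta>) / 2 \<le> (1 - x) / 2" using xc by simp
    ultimately show ?thesis by linarith
  qed
  moreover have "(1 - cos \<theta>) / 2 \<ge> \<theta>^2/8" using one_minus_cos_lower[of \<theta>] th2 by simp
  ultimately have "\<theta>^2/8 \<le> exp (- r0)" "E = exp (- r0) powr \<alpha>" by linarith+
  then have EQ: "E \<ge> (\<theta>^2/8) powr \<alpha>" using a by (simp add: powr_mono2)
  define Q where "Q = (\<theta>^2/8) powr \<alpha>"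
  have th0: "\<theta> \<noteq> 0" using th1 phiRR_cos(2)[OF R] by auto
  have Q0: "Q > 0" unfolding Q_def using th0 by simp
  have "e * Q \<le> e * (1 - t0)" unfolding Q_def using tE EQ e0 by (intro mult_left_mono) auto
  then have XQ: "1 - X \<ge> e * Q" using X1 by linarith
  have "0 < e * Q" using e0 Q0 by simp
  then have Xb: "\<bar>X\<bar> < 1" using X0 XQ by linarith
  have "cosh (\<alpha> * gfun \<alpha> R e \<theta>) - 1 = 2 * X^2 / (1 - X^2)" unfolding Xg by (rule cosh_artanh2[OF Xb])
  also have "\<dots> \<le> 2 / (1 - X)"
  proof -
    have a1: "X^2 \<le> X" using X0 Xb by (simp add: power2_eq_square mult_left_le)
    have a2: "X^2 \<le> 1" using X0 Xb by (simp add: abs_square_le_1)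
    have "0 < 1 - X" using Xb by simp
    have b0: "0 < 1 - X^2" using Xb abs_square_less_1[of X] by simp
    have "2 * X^2 / (1 - X^2) \<le> 2 / (1 - X^2)" using b0 a2 by (intro divide_right_mono) auto
    also have "\<dots> \<le> 2 / (1 - X)" using b0 a1 \<open>0 < 1 - X\<close> by (intro divide_left_mono) auto
    finally show ?thesis .
  qed
  also have "\<dots> \<le> 2 / (e * Q)" using XQ \<open>0 < e * Q\<close> by (intro divide_left_mono) auto
  finally show ?thesis unfolding Q_def .
qed

lemma meas_sinh[measurable]: "sinh \<in> borel_measurable (borel :: real measure)"
  by (intro borel_measurable_continuous_onI continuous_intros)
lemma meas_cosh[measurable]: "cosh \<in> borel_measurable (borel :: real measure)"
  by (intro borel_measurable_continuous_onI continuous_intros)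

lemma t1: "(\<lambda>x::real\<times>real. ennreal (K * sinh (\<alpha> * fst x)) * indicator ({0..R} \<times> {-pi<..pi}) x) \<in> borel_measurable (lborel \<Otimes>\<^sub>M lborel)"
  by measurable

lemma t2: "gfun \<alpha> R e \<in> borel_measurable borel"
  unfolding gfun_def artanh_def tanh_def by measurable

lemma t3: "{x::real\<times>real. 0 \<le> fst x \<and> t < \<bar>snd x\<bar> \<and> \<bar>snd x\<bar> < pi/2 \<and> fst x \<le> gfun \<alpha> R e (snd x)} \<in> sets (lborel \<Otimes>\<^sub>M lborel)"
proof -
  note t2[measurable]
  have "{x::real\<times>real. 0 \<le> fst x \<and> t < \<bar>snd x\<bar> \<and> \<bar>snd x\<bar> < pi/2 \<and> fst x \<le> gfun \<alpha> R e (snd x)}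
     = {x \<in> space (lborel \<Otimes>\<^sub>M lborel). 0 \<le> fst x \<and> t < \<bar>snd x\<bar> \<and> \<bar>snd x\<bar> < pi/2 \<and> fst x \<le> gfun \<alpha> R e (snd x)}" by (simp add: space_pair_measure)
  also have "\<dots> \<in> sets (lborel \<Otimes>\<^sub>M lborel)" by measurable
  finally show ?thesis .
qed

lemma inner_FTC: fixes K \<alpha> a :: real assumes "0 \<le> a" "0 < \<alpha>" "0 \<le> K"
  shows "(\<integral>\<^sup>+r. ennreal (K * sinh (\<alpha> * r)) * indicator {0..a} r \<partial>lborel) = ennreal (K * (cosh (\<alpha> * a) - 1) / \<alpha>)"
proof -
  have "(\<integral>\<^sup>+r. ennreal (K * sinh (\<alpha> * r)) * indicator {0..a} r \<partial>lborel) = ennreal ((\<lambda>r. K * cosh (\<alpha> * r) / \<alpha>) a - (\<lambda>r. K * cosh (\<alpha> * r) / \<alpha>) 0)"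
  proof (rule nn_integral_FTC_Icc)
    show "(\<lambda>r. K * sinh (\<alpha> * r)) \<in> borel_measurable borel" by measurable
    fix x assume x: "x \<in> {0..a}"
    show "((\<lambda>r. K * cosh (\<alpha> * r) / \<alpha>) has_real_derivative K * sinh (\<alpha> * x)) (at x)"
      using assms by (auto intro!: derivative_eq_intros)
    show "0 \<le> K * sinh (\<alpha> * x)" using assms x by simp
  qed (use assms in auto)
  also have "\<dots> = ennreal (K * (cosh (\<alpha> * a) - 1) / \<alpha>)" by (simp add: right_diff_distrib diff_divide_distrib)
  finally show ?thesis .
qed

definition dens :: "real \<Rightarrow> real \<Rightarrow> real \<Rightarrow> real \<times> real \<Rightarrow> ennreal" where
  "dens K \<alpha> R x = ennreal (K * sinh (\<alpha> * fst x)) * indicator ({0..R} \<times> {-pi<..pi}) x"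

lemma dens_meas[measurable]: "dens K \<alpha> R \<in> borel_measurable (lborel \<Otimes>\<^sub>M lborel)"
  unfolding dens_def by measurable

lemma mu_meas_eq: "mu_meas \<nu> \<alpha> n = density lborel (dens (real n * \<alpha> / (2 * pi * (cosh (\<alpha> * hypR \<nu> n) - 1))) \<alpha> (hypR \<nu> n))"
  unfolding mu_meas_def
proof (intro arg_cong[where f="density lborel"] ext)
  fix x :: "real \<times> real"
  obtain r \<theta> where x: "x = (r, \<theta>)" by (cases x)
  show "(case x of (r, \<theta>) \<Rightarrow> if (r, \<theta>) \<in> polar_disk (hypR \<nu> n)
            then ennreal (real n * \<alpha> * sinh (\<alpha> * r) / (2 * pi * (cosh (\<alpha> * hypR \<nu> n) - 1))) else 0)
        = dens (real n * \<alpha> / (2 * pi * (cosh (\<alpha> * hypR \<nu> n) - 1))) \<alpha> (hypR \<nu> n) x"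
    unfolding x dens_def polar_disk_def by (auto simp: indicator_def)
qed

lemma tonelli: assumes S: "S \<in> sets (lborel \<Otimes>\<^sub>M lborel)"
  shows "emeasure (density lborel (dens K \<alpha> R)) S = (\<integral>\<^sup>+\<theta>. (\<integral>\<^sup>+r. dens K \<alpha> R (r, \<theta>) * indicator S (r, \<theta>) \<partial>lborel) \<partial>lborel)"
proof -
  have S': "S \<in> sets lborel" using S unfolding lborel_prod .
  have m: "dens K \<alpha> R \<in> borel_measurable lborel" using dens_meas unfolding lborel_prod .
  have "emeasure (density lborel (dens K \<alpha> R)) S = (\<integral>\<^sup>+x. dens K \<alpha> R x * indicator S x \<partial>lborel)"
    by (rule emeasure_density[OF m S'])
  also have "\<dots> = (\<integral>\<^sup>+x. dens K \<alpha> R x * indicator S x \<partial>(lborel \<Otimes>\<^sub>M lborel))" unfolding lborel_prod ..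
  also have "\<dots> = (\<integral>\<^sup>+\<theta>. (\<integral>\<^sup>+r. dens K \<alpha> R (r, \<theta>) * indicator S (r, \<theta>) \<partial>lborel) \<partial>lborel)"
    by (rule lborel_pair.nn_integral_snd[symmetric]) (use S in measurable)
  finally show ?thesis .
qed

lemma measA: fixes t R \<alpha> K :: real assumes t: "0 \<le> t" "t < pi" and R: "0 \<le> R" and a: "\<alpha> > 0" and K: "K \<ge> 0"
  shows "emeasure (density lborel (dens K \<alpha> R)) ({0..R} \<times> {-t..t}) = ennreal (K * (cosh (\<alpha> * R) - 1) / \<alpha> * (2 * t))"
proof -
  have S: "{0..R} \<times> {-t..t} \<in> sets (lborel \<Otimes>\<^sub>M lborel)" by (intro pair_measureI) auto
  have inner: "(\<integral>\<^sup>+r. dens K \<alpha> R (r, \<theta>) * indicator ({0..R} \<times> {-t..t}) (r, \<theta>) \<partial>lborel)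
      = ennreal (K * (cosh (\<alpha> * R) - 1) / \<alpha>) * indicator {-t..t} \<theta>" for \<theta>
  proof (cases "\<theta> \<in> {-t..t}")
    case True
    then have th: "-pi < \<theta>" "\<theta> \<le> pi" using t by auto
    have "(\<integral>\<^sup>+r. dens K \<alpha> R (r, \<theta>) * indicator ({0..R} \<times> {-t..t}) (r, \<theta>) \<partial>lborel)
        = (\<integral>\<^sup>+r. ennreal (K * sinh (\<alpha> * r)) * indicator {0..R} r \<partial>lborel)"
      using True th by (intro nn_integral_cong) (auto simp: dens_def indicator_def)
    also have "\<dots> = ennreal (K * (cosh (\<alpha> * R) - 1) / \<alpha>)" by (rule inner_FTC[OF R a K])
    finally show ?thesis using True by simp
  next
    case False
    then have "\<And>r. dens K \<alpha> R (r, \<theta>) * indicator ({0..R} \<times> {-t..t}) (r, \<theta>) = 0"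
      by (simp add: indicator_def)
    then show ?thesis using False by simp
  qed
  have "emeasure (density lborel (dens K \<alpha> R)) ({0..R} \<times> {-t..t})
      = (\<integral>\<^sup>+\<theta>. ennreal (K * (cosh (\<alpha> * R) - 1) / \<alpha>) * indicator {-t..t} \<theta> \<partial>lborel)"
    unfolding tonelli[OF S] inner ..
  also have "\<dots> = ennreal (K * (cosh (\<alpha> * R) - 1) / \<alpha>) * emeasure lborel {-t..t}"
    by (rule nn_integral_cmult_indicator) simp
  also have "\<dots> = ennreal (K * (cosh (\<alpha> * R) - 1) / \<alpha>) * ennreal (2 * t)"
    using t by simp
  also have "\<dots> = ennreal (K * (cosh (\<alpha> * R) - 1) / \<alpha> * (2 * t))"
  proof -
    have "0 \<le> cosh (\<alpha> * R) - 1" using cosh_real_ge_1[of "\<alpha> * R"] by linarith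
    then have "0 \<le> K * (cosh (\<alpha> * R) - 1) / \<alpha>" using K a by simp
    then show ?thesis using t by (intro ennreal_mult[symmetric]) auto
  qed
  finally show ?thesis .
qed

lemma FTC_pos: fixes c q a b :: real assumes q: "q > 1" and ab: "0 < a" "a \<le> b" and c: "c \<ge> 0"
  shows "(\<integral>\<^sup>+x. ennreal (c * \<bar>x\<bar> powr (-q)) * indicator {a..b} x \<partial>lborel) \<le> ennreal (c * a powr (1 - q) / (q - 1))"
proof -
  have "(\<integral>\<^sup>+x. ennreal (c * \<bar>x\<bar> powr (-q)) * indicator {a..b} x \<partial>lborel)
     = ennreal ((\<lambda>x. c * x powr (1 - q) / (1 - q)) b - (\<lambda>x. c * x powr (1 - q) / (1 - q)) a)"
  proof (rule nn_integral_FTC_Icc)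
    show "(\<lambda>x. c * \<bar>x\<bar> powr (-q)) \<in> borel_measurable borel" by measurable
    fix x assume x: "x \<in> {a..b}"
    then have x0: "x > 0" using ab by auto
    show "((\<lambda>x. c * x powr (1 - q) / (1 - q)) has_real_derivative c * \<bar>x\<bar> powr (-q)) (at x)"
    proof -
      have "(q - 1) * (q - 1) > 0" using q by simp
      then have qq: "1 + q * q - q * 2 > 0" by (simp add: algebra_simps)
      show ?thesis using x0 q qq by (auto intro!: derivative_eq_intros simp: field_simps)
    qed
    show "0 \<le> c * \<bar>x\<bar> powr (-q)" using c by simp
  qed (use ab in auto)
  also have "\<dots> \<le> ennreal (c * a powr (1 - q) / (q - 1))"
  proof (rule ennreal_leI)
    have "c * b powr (1 - q) / (q - 1) \<ge> 0" using c q by simp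
    moreover have "c * b powr (1 - q) / (1 - q) - c * a powr (1 - q) / (1 - q) = c * a powr (1 - q) / (q - 1) - c * b powr (1 - q) / (q - 1)"
      using q by (simp add: field_simps)
    ultimately show "c * b powr (1 - q) / (1 - q) - c * a powr (1 - q) / (1 - q) \<le> c * a powr (1 - q) / (q - 1)" by linarith
  qed
  finally show ?thesis .
qed

lemma FTC_neg: fixes c q a b :: real assumes q: "q > 1" and ab: "0 < a" "a \<le> b" and c: "c \<ge> 0"
  shows "(\<integral>\<^sup>+x. ennreal (c * \<bar>x\<bar> powr (-q)) * indicator {-b..-a} x \<partial>lborel) \<le> ennreal (c * a powr (1 - q) / (q - 1))"
proof -
  have "(\<integral>\<^sup>+x. ennreal (c * \<bar>x\<bar> powr (-q)) * indicator {-b..-a} x \<partial>lborel)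
     = ennreal ((\<lambda>x. c * (-x) powr (1 - q) / (q - 1)) (-a) - (\<lambda>x. c * (-x) powr (1 - q) / (q - 1)) (-b))"
  proof (rule nn_integral_FTC_Icc)
    show "(\<lambda>x. c * \<bar>x\<bar> powr (-q)) \<in> borel_measurable borel" by measurable
    fix x assume x: "x \<in> {-b..-a}"
    then have x0: "x < 0" using ab by auto
    show "((\<lambda>x. c * (-x) powr (1 - q) / (q - 1)) has_real_derivative c * \<bar>x\<bar> powr (-q)) (at x)"
    proof -
      have "(q - 1) * (q - 1) > 0" using q by simp
      then have qq: "1 + q * q - q * 2 > 0" by (simp add: algebra_simps)
      show ?thesis using x0 q qq by (auto intro!: derivative_eq_intros simp: field_simps)
    qed
    show "0 \<le> c * \<bar>x\<bar> powr (-q)" using c by simp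
  qed (use ab in auto)
  also have "\<dots> \<le> ennreal (c * a powr (1 - q) / (q - 1))"
  proof (rule ennreal_leI)
    have "c * b powr (1 - q) / (q - 1) \<ge> 0" using c q by simp
    then show "c * (- (- a)) powr (1 - q) / (q - 1) - c * (- (- b)) powr (1 - q) / (q - 1) \<le> c * a powr (1 - q) / (q - 1)"
      by simp
  qed
  finally show ?thesis .
qed

definition Bset :: "real \<Rightarrow> real \<Rightarrow> real \<Rightarrow> real \<Rightarrow> (real \<times> real) set" where
  "Bset \<alpha> R e t = {x. 0 \<le> fst x \<and> t < \<bar>snd x\<bar> \<and> \<bar>snd x\<bar> < pi/2 \<and> fst x \<le> gfun \<alpha> R e (snd x)}"

lemma Bset_meas: "Bset \<alpha> R e t \<in> sets (lborel \<Otimes>\<^sub>M lborel)"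
  unfolding Bset_def by (rule t3)

lemma powr_conv: fixes \<theta> \<alpha> :: real assumes "\<theta> \<noteq> 0"
  shows "(\<theta>^2/8) powr \<alpha> = \<bar>\<theta>\<bar> powr (2*\<alpha>) / 8 powr \<alpha>"
proof -
  have "\<theta>^2 = \<bar>\<theta>\<bar> powr 2" using assms by (simp add: powr_numeral)
  then have "(\<theta>^2) powr \<alpha> = \<bar>\<theta>\<bar> powr (2*\<alpha>)" by (simp only: powr_powr mult.commute)
  moreover have "(\<theta>^2/8) powr \<alpha> = (\<theta>^2) powr \<alpha> / 8 powr \<alpha>" by (simp add: powr_divide)
  ultimately show ?thesis by simp
qed

lemma measB: fixes \<alpha> R e t K \<kappa> s :: real
  assumes R: "R > 0" and a: "\<alpha> > 1/2" and e0: "0 < e" and e1: "e \<le> 1" and ee: "eps \<alpha> \<kappa> s = e"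
    and K: "K \<ge> 0" and t: "phi R R \<le> t" "0 < t" "t \<le> pi/2"
  shows "emeasure (density lborel (dens K \<alpha> R)) (Bset \<alpha> R e t)
          \<le> ennreal (2 * ((K / \<alpha> * 2 * 8 powr \<alpha> / e) * t powr (1 - 2*\<alpha>) / (2*\<alpha> - 1)))"
proof -
  define c where "c = K / \<alpha> * 2 * 8 powr \<alpha> / e"
  have a0: "\<alpha> > 0" using a by simp
  have c0: "c \<ge> 0" unfolding c_def using K a0 e0 by simp
  define T where "T = {\<theta>::real. t < \<bar>\<theta>\<bar> \<and> \<bar>\<theta>\<bar> < pi/2}"
  have inner: "(\<integral>\<^sup>+r. dens K \<alpha> R (r, \<theta>) * indicator (Bset \<alpha> R e t) (r, \<theta>) \<partial>lborel)
      \<le> ennreal (c * \<bar>\<theta>\<bar> powr (-(2*\<alpha>))) * indicator T \<theta>" for \<theta>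
  proof (cases "\<theta> \<in> T")
    case True
    then have th: "phi R R < \<bar>\<theta>\<bar>" "\<bar>\<theta>\<bar> < pi/2" "-pi < \<theta>" "\<theta> \<le> pi" "\<theta> \<noteq> 0"
      using t unfolding T_def by auto
    define g where "g = gfun \<alpha> R e \<theta>"
    have g: "g \<le> R" "0 \<le> g" unfolding g_def using rrt_eq[OF R a0 e0 e1 ee th(1,2)] by auto
    have "(\<integral>\<^sup>+r. dens K \<alpha> R (r, \<theta>) * indicator (Bset \<alpha> R e t) (r, \<theta>) \<partial>lborel)
        = (\<integral>\<^sup>+r. ennreal (K * sinh (\<alpha> * r)) * indicator {0..g} r \<partial>lborel)"
      using True th g unfolding T_def
      by (intro nn_integral_cong) (auto simp: dens_def Bset_def indicator_def g_def)
    also have "\<dots> = ennreal (K * (cosh (\<alpha> * g) - 1) / \<alpha>)" by (rule inner_FTC[OF g(2) a0 K])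
    also have "\<dots> \<le> ennreal (c * \<bar>\<theta>\<bar> powr (-(2*\<alpha>)))"
    proof (rule ennreal_leI)
      have gb: "cosh (\<alpha> * g) - 1 \<le> 2 / (e * (\<theta>^2/8) powr \<alpha>)" unfolding g_def
        by (rule g_bound[OF R a0 e0 e1 th(1,2)])
      have "K * (cosh (\<alpha> * g) - 1) / \<alpha> \<le> K * (2 / (e * (\<theta>^2/8) powr \<alpha>)) / \<alpha>"
        using gb K a0 by (intro divide_right_mono mult_left_mono) auto
      also have "\<dots> = c * \<bar>\<theta>\<bar> powr (-(2*\<alpha>))" unfolding c_def powr_conv[OF th(5)] powr_minus
        using e0 a0 by (simp add: field_simps)
      finally show "K * (cosh (\<alpha> * g) - 1) / \<alpha> \<le> c * \<bar>\<theta>\<bar> powr (-(2*\<alpha>))" .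
    qed
    finally show ?thesis using True by simp
  next
    case False
    then have Z: "\<And>r. dens K \<alpha> R (r, \<theta>) * indicator (Bset \<alpha> R e t) (r, \<theta>) = 0"
      unfolding T_def by (auto simp: indicator_def Bset_def)
    have "(\<integral>\<^sup>+r. dens K \<alpha> R (r, \<theta>) * indicator (Bset \<alpha> R e t) (r, \<theta>) \<partial>lborel) = (\<integral>\<^sup>+(r::real). 0 \<partial>lborel)"
      by (simp only: Z)
    then show ?thesis by simp
  qed
  have "emeasure (density lborel (dens K \<alpha> R)) (Bset \<alpha> R e t)
      = (\<integral>\<^sup>+\<theta>. (\<integral>\<^sup>+r. dens K \<alpha> R (r, \<theta>) * indicator (Bset \<alpha> R e t) (r, \<theta>) \<partial>lborel) \<partial>lborel)"
    by (rule tonelli[OF Bset_meas])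
  also have "\<dots> \<le> (\<integral>\<^sup>+\<theta>. ennreal (c * \<bar>\<theta>\<bar> powr (-(2*\<alpha>))) * indicator T \<theta> \<partial>lborel)"
    by (intro nn_integral_mono inner)
  also have "\<dots> \<le> (\<integral>\<^sup>+\<theta>. ennreal (c * \<bar>\<theta>\<bar> powr (-(2*\<alpha>))) * indicator {t..pi/2} \<theta>
                        + ennreal (c * \<bar>\<theta>\<bar> powr (-(2*\<alpha>))) * indicator {-(pi/2)..-t} \<theta> \<partial>lborel)"
  proof (intro nn_integral_mono)
    fix \<theta> :: real
    show "ennreal (c * \<bar>\<theta>\<bar> powr (-(2*\<alpha>))) * indicator T \<theta>
        \<le> ennreal (c * \<bar>\<theta>\<bar> powr (-(2*\<alpha>))) * indicator {t..pi/2} \<theta> + ennreal (c * \<bar>\<theta>\<bar> powr (-(2*\<alpha>))) * indicator {-(pi/2)..-t} \<theta>"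
      unfolding T_def by (cases "\<theta> \<ge> 0") (auto simp: indicator_def)
  qed
  also have "\<dots> = (\<integral>\<^sup>+\<theta>. ennreal (c * \<bar>\<theta>\<bar> powr (-(2*\<alpha>))) * indicator {t..pi/2} \<theta> \<partial>lborel)
                 + (\<integral>\<^sup>+\<theta>. ennreal (c * \<bar>\<theta>\<bar> powr (-(2*\<alpha>))) * indicator {-(pi/2)..-t} \<theta> \<partial>lborel)"
    by (rule nn_integral_add) measurable
  also have "\<dots> \<le> ennreal (c * t powr (1 - 2*\<alpha>) / (2*\<alpha> - 1)) + ennreal (c * t powr (1 - 2*\<alpha>) / (2*\<alpha> - 1))"
  proof (intro add_mono)
    have q: "2*\<alpha> > 1" using a by simp
    show "(\<integral>\<^sup>+\<theta>. ennreal (c * \<bar>\<theta>\<bar> powr (-(2*\<alpha>))) * indicator {t..pi/2} \<theta> \<partial>lborel) \<le> ennreal (c * t powr (1 - 2*\<alpha>) / (2*\<alpha> - 1))"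
      using FTC_pos[OF q t(2) t(3) c0] by simp
    show "(\<integral>\<^sup>+\<theta>. ennreal (c * \<bar>\<theta>\<bar> powr (-(2*\<alpha>))) * indicator {-(pi/2)..-t} \<theta> \<partial>lborel) \<le> ennreal (c * t powr (1 - 2*\<alpha>) / (2*\<alpha> - 1))"
      using FTC_neg[OF q t(2) t(3) c0] by simp
  qed
  also have "\<dots> = ennreal (2 * (c * t powr (1 - 2*\<alpha>) / (2*\<alpha> - 1)))"
  proof -
    have "0 \<le> c * t powr (1 - 2*\<alpha>) / (2*\<alpha> - 1)" using c0 a by simp
    then show ?thesis by (simp add: ennreal_plus[symmetric] del: ennreal_plus)
  qed
  finally show ?thesis unfolding c_def .
qed

lemma D_decomp: fixes \<nu> \<alpha> \<kappa> s e t :: real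
  assumes R: "hypR \<nu> n > 0" and a: "\<alpha> > 0" and e0: "0 < e" and e1: "e \<le> 1" and ee: "eps \<alpha> \<kappa> s = e"
    and tdef: "t = phi (hypR \<nu> n) (hypR \<nu> n) + \<kappa> * phi_s \<alpha> (hypR \<nu> n) s"
    and t1: "phi (hypR \<nu> n) (hypR \<nu> n) \<le> t" and t2: "t \<le> pi/2"
  shows "D_s \<nu> \<alpha> n \<kappa> s = ({0..hypR \<nu> n} \<times> {-t..t}) \<union> Bset \<alpha> (hypR \<nu> n) e t"
proof -
  define R where "R = hypR \<nu> n"
  have R0: "R > 0" using R unfolding R_def .
  have t1': "phi R R \<le> t" using t1 unfolding R_def .
  have D: "D_s \<nu> \<alpha> n \<kappa> s = {(r, \<theta>) \<in> polar_disk R. \<bar>\<theta>\<bar> \<le> pi / 2 \<and>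
        (\<bar>\<theta>\<bar> \<le> t \<or> (phi R R \<le> \<bar>\<theta>\<bar> \<and> \<bar>\<theta>\<bar> < pi / 2 \<and> r \<le> rr0_tilde \<alpha> R \<kappa> s \<theta>))}"
    unfolding D_s_def Let_def R_def tdef ..
  have pi2: "pi/2 < pi" by simp
  show ?thesis unfolding D R_def[symmetric]
  proof (intro set_eqI iffI)
    fix x :: "real \<times> real"
    obtain r \<theta> where x: "x = (r, \<theta>)" by (cases x)
    assume "x \<in> {(r, \<theta>) \<in> polar_disk R. \<bar>\<theta>\<bar> \<le> pi / 2 \<and>
        (\<bar>\<theta>\<bar> \<le> t \<or> (phi R R \<le> \<bar>\<theta>\<bar> \<and> \<bar>\<theta>\<bar> < pi / 2 \<and> r \<le> rr0_tilde \<alpha> R \<kappa> s \<theta>))}"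
    then have m: "0 \<le> r" "r \<le> R" "\<bar>\<theta>\<bar> \<le> pi/2" "\<bar>\<theta>\<bar> \<le> t \<or> (\<bar>\<theta>\<bar> < pi / 2 \<and> r \<le> rr0_tilde \<alpha> R \<kappa> s \<theta>)"
      unfolding x polar_disk_def by auto
    show "x \<in> {0..R} \<times> {-t..t} \<union> Bset \<alpha> R e t"
    proof (cases "\<bar>\<theta>\<bar> \<le> t")
      case True
      then show ?thesis using m unfolding x by auto
    next
      case False
      then have th: "phi R R < \<bar>\<theta>\<bar>" "\<bar>\<theta>\<bar> < pi/2" "r \<le> rr0_tilde \<alpha> R \<kappa> s \<theta>" using m t1' by auto
      have "rr0_tilde \<alpha> R \<kappa> s \<theta> = gfun \<alpha> R e \<theta>" using rrt_eq(1)[OF R0 a e0 e1 ee th(1,2)] .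
      then show ?thesis using th m False unfolding x Bset_def by auto
    qed
  next
    fix x :: "real \<times> real"
    obtain r \<theta> where x: "x = (r, \<theta>)" by (cases x)
    assume "x \<in> {0..R} \<times> {-t..t} \<union> Bset \<alpha> R e t"
    then consider "0 \<le> r" "r \<le> R" "\<bar>\<theta>\<bar> \<le> t" | "0 \<le> r" "t < \<bar>\<theta>\<bar>" "\<bar>\<theta>\<bar> < pi/2" "r \<le> gfun \<alpha> R e \<theta>"
      unfolding x Bset_def by auto
    then show "x \<in> {(r, \<theta>) \<in> polar_disk R. \<bar>\<theta>\<bar> \<le> pi / 2 \<and>
        (\<bar>\<theta>\<bar> \<le> t \<or> (phi R R \<le> \<bar>\<theta>\<bar> \<and> \<bar>\<theta>\<bar> < pi / 2 \<and> r \<le> rr0_tilde \<alpha> R \<kappa> s \<theta>))}"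
    proof cases
      case 1
      have "-t \<le> \<theta>" "\<theta> \<le> t" using 1(3) by auto
      then have "-pi < \<theta>" "\<theta> \<le> pi" using t2 pi_gt_zero by linarith+
      then show ?thesis using 1 t2 unfolding x polar_disk_def by auto
    next
      case 2
      then have th: "phi R R < \<bar>\<theta>\<bar>" "\<bar>\<theta>\<bar> < pi/2" using t1' by auto
      note G = rrt_eq[OF R0 a e0 e1 ee th]
      show ?thesis using 2 G th pi2 unfolding x polar_disk_def by auto
    qed
  qed
qed

lemma superadd: fixes a p :: real assumes a: "a \<ge> 0" and p: "p \<ge> 1"
  shows "1 + a powr p \<le> (1 + a) powr p"
proof (cases "a = 0")
  case True then show ?thesis using p by simp
next
  case False
  then have a0: "a > 0" using a by simp
  have "(1 + a) powr p = (1 + a) powr ((p - 1) + 1)" by simp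
  also have "\<dots> = (1 + a) powr (p - 1) * (1 + a) powr 1" by (rule powr_add)
  also have "\<dots> = (1 + a) powr (p - 1) + a * (1 + a) powr (p - 1)" using a0 by (simp add: algebra_simps)
  finally have Cq: "(1 + a) powr p = (1 + a) powr (p - 1) + a * (1 + a) powr (p - 1)" .
  have A: "1 + a * a powr (p - 1) \<le> (1 + a) powr (p - 1) + a * (1 + a) powr (p - 1)"
  proof (rule add_mono)
    show "1 \<le> (1 + a) powr (p - 1)" using a p by (intro ge_one_powr_ge_zero) auto
    show "a * a powr (p - 1) \<le> a * (1 + a) powr (p - 1)" using a p by (intro mult_left_mono powr_mono2) auto
  qed
  have "a powr p = a powr ((p - 1) + 1)" by simp
  also have "\<dots> = a powr (p - 1) * a powr 1" by (rule powr_add)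
  also have "\<dots> = a * a powr (p - 1)" using a0 by simp
  finally have B: "a powr p = a * a powr (p - 1)" .
  show ?thesis unfolding Cq B using A .
qed

lemma eps_props: fixes \<alpha> \<kappa> s :: real assumes a: "\<alpha> > 1/2" and k: "\<kappa> \<ge> 1" and s: "s > 0"
  shows "0 < eps \<alpha> \<kappa> s" "eps \<alpha> \<kappa> s \<le> 1" "1 / eps \<alpha> \<kappa> s \<le> (1 + \<kappa> * s powr (1/(2*\<alpha>))) powr (2*\<alpha>)"
proof -
  define a where "a = \<kappa> * s powr (1/(2*\<alpha>))"
  define p where "p = 2 * \<alpha>"
  have p: "p \<ge> 1" "p > 0" using a unfolding p_def by auto
  have a0: "a > 0" unfolding a_def using k s by simp
  have "s powr (1/p) \<le> a" unfolding a_def p_def using k s by simp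
  then have "(s powr (1/p)) powr p \<le> a powr p" using p s by (intro powr_mono2) auto
  then have sa: "s \<le> a powr p" using p s by (simp add: powr_powr)
  define D where "D = (1 + a) powr p"
  have D: "1 + s \<le> D" unfolding D_def using superadd[of a p] a0 p sa by simp
  have e: "eps \<alpha> \<kappa> s = (1 + s) / D" unfolding eps_def D_def a_def p_def ..
  have D0: "D > 0" using D s by simp
  show "0 < eps \<alpha> \<kappa> s" unfolding e using D0 s by simp
  show "eps \<alpha> \<kappa> s \<le> 1" unfolding e using D0 D by simp
  have "1 / eps \<alpha> \<kappa> s = D / (1 + s)" unfolding e by simp
  also have "\<dots> \<le> D" using D0 s by (simp add: field_simps)
  finally show "1 / eps \<alpha> \<kappa> s \<le> (1 + \<kappa> * s powr (1/(2*\<alpha>))) powr (2*\<alpha>)" unfolding D_def a_def p_def .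
qed

lemma U_bound: fixes u Q t \<alpha> e Cm n :: real
  assumes u: "u > 0" and Q: "Q \<ge> 1" and t: "u * Q \<le> t" and a: "\<alpha> > 1/2" "\<alpha> \<le> 1" and e: "e > 0"
    and eQ: "1 / e \<le> Q powr (2*\<alpha>)" and C: "u powr (-(2*\<alpha>)) / 4 \<le> Cm" and n: "n \<ge> 0"
  shows "2 * (n * \<alpha> / (2 * pi * Cm) / \<alpha> * 2 * 8 powr \<alpha> / e * t powr (1 - 2*\<alpha>) / (2*\<alpha> - 1))
          \<le> 64 * n * t / (pi * (2*\<alpha> - 1))"
proof -
  have a0: "\<alpha> > 0" "2*\<alpha> - 1 > 0" using a by auto
  have "u * Q > 0" using u Q by simp
  then have t0: "t > 0" using t by linarith
  have "u powr (-(2*\<alpha>)) / 4 > 0" using u by simp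
  then have C0: "Cm > 0" using C by linarith
  have "1 / Cm \<le> 4 * u powr (2*\<alpha>)"
  proof -
    have "u powr (-(2*\<alpha>)) > 0" using u by simp
    then have "0 < Cm * (u powr (-(2*\<alpha>)) / 4)" using C0 by simp
    then have "1 / Cm \<le> 1 / (u powr (-(2*\<alpha>)) / 4)" using C by (intro divide_left_mono) auto
    also have "\<dots> = 4 * u powr (2*\<alpha>)" using u by (simp add: powr_minus field_simps)
    finally show ?thesis .
  qed
  then have "1 / Cm * (1 / e) \<le> 4 * u powr (2*\<alpha>) * Q powr (2*\<alpha>)"
    using eQ e C0 u by (intro mult_mono) auto
  also have "\<dots> = 4 * (u * Q) powr (2*\<alpha>)" using u Q by (simp add: powr_mult)
  also have "\<dots> \<le> 4 * t powr (2*\<alpha>)" using t u Q a0 by (simp add: powr_mono2)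
  finally have ce: "1 / (Cm * e) \<le> 4 * t powr (2*\<alpha>)" by simp
  have e8: "8 powr \<alpha> \<le> 8" using a powr_mono[of \<alpha> 1 8] by simp
  have "2 * (n * \<alpha> / (2 * pi * Cm) / \<alpha> * 2 * 8 powr \<alpha> / e * t powr (1 - 2*\<alpha>) / (2*\<alpha> - 1))
      = (2 * n / (pi * (2*\<alpha> - 1))) * 8 powr \<alpha> * t powr (1 - 2*\<alpha>) * (1 / (Cm * e))"
    using a0 C0 e by (simp add: field_simps)
  also have "\<dots> \<le> (2 * n / (pi * (2*\<alpha> - 1))) * 8 * t powr (1 - 2*\<alpha>) * (4 * t powr (2*\<alpha>))"
    using e8 ce n a0 C0 e by (intro mult_mono) auto
  also have "t powr (1 - 2*\<alpha>) * t powr (2*\<alpha>) = t" using t0 by (simp flip: powr_add)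
  then have "(2 * n / (pi * (2*\<alpha> - 1))) * 8 * t powr (1 - 2*\<alpha>) * (4 * t powr (2*\<alpha>)) = 64 * n * t / (pi * (2*\<alpha> - 1))"
    by (simp add: field_simps)
  finally show ?thesis .
qed

lemma hyp_facts: fixes \<nu> \<alpha> s :: real assumes nu: "\<nu> > 0" and nb: "real n > \<nu> * exp 2" and a: "\<alpha> > 0" and s: "s > 0"
  shows "hypR \<nu> n > 4" "exp (- hypR \<nu> n / 2) = \<nu> / real n"
    "(\<nu> / real n) powr (-(2*\<alpha>)) = exp (\<alpha> * hypR \<nu> n)"
    "phi_s \<alpha> (hypR \<nu> n) s = s powr (1/(2*\<alpha>)) * (\<nu> / real n)"
proof -
  define x where "x = real n / \<nu>"
  have x: "x > exp 2" unfolding x_def using nb nu by (simp add: field_simps)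
  have x0: "x > 0" using x by (smt (verit) exp_gt_zero)
  have R: "hypR \<nu> n = 2 * ln x" unfolding hypR_def x_def ..
  have "ln x > 2" using x x0 by (metis exp_gt_zero ln_exp ln_less_cancel_iff)
  then show "hypR \<nu> n > 4" unfolding R by simp
  have u: "\<nu> / real n = 1 / x" unfolding x_def by simp
  show "exp (- hypR \<nu> n / 2) = \<nu> / real n" unfolding R u using x0 by (simp add: exp_minus exp_ln inverse_eq_divide)
  show "(\<nu> / real n) powr (-(2*\<alpha>)) = exp (\<alpha> * hypR \<nu> n)" unfolding R u using x0
    by (simp add: powr_def ln_div algebra_simps)
  have eR: "exp (hypR \<nu> n) = x^2" unfolding R using x0
    by (metis exp_ln exp_of_nat_mult of_nat_numeral)
  have "sqrt (s powr (1/\<alpha>)) = s powr (1/(2*\<alpha>))" using s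
    by (simp add: powr_half_sqrt[symmetric] powr_powr mult.commute)
  then show "phi_s \<alpha> (hypR \<nu> n) s = s powr (1/(2*\<alpha>)) * (\<nu> / real n)"
    unfolding phi_s_def eR u using x0 by (simp add: real_sqrt_divide)
qed

lemma per_n: fixes \<nu> \<alpha> \<kappa> s t :: real
  assumes nu: "\<nu> > 0" and a: "1/2 < \<alpha>" "\<alpha> \<le> 1" and s: "s > 0" and k: "\<kappa> \<ge> 1"
    and nb: "real n > \<nu> * exp 2"
    and tdef: "t = phi (hypR \<nu> n) (hypR \<nu> n) + \<kappa> * phi_s \<alpha> (hypR \<nu> n) s" and t2: "t \<le> pi/2"
  shows "real n * t / pi \<le> measure (mu_meas \<nu> \<alpha> n) (D_s \<nu> \<alpha> n \<kappa> s)"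
    "measure (mu_meas \<nu> \<alpha> n) (D_s \<nu> \<alpha> n \<kappa> s) \<le> real n * t / pi + 64 * real n * t / (pi * (2*\<alpha> - 1))"
    "\<nu> * (1 + \<kappa> * s powr (1/(2*\<alpha>))) \<le> real n * t"
    "real n * t \<le> 3 * \<nu> * (1 + \<kappa> * s powr (1/(2*\<alpha>)))"
proof -
  define R where "R = hypR \<nu> n"
  define u where "u = \<nu> / real n"
  define Q where "Q = 1 + \<kappa> * s powr (1/(2*\<alpha>))"
  define e where "e = eps \<alpha> \<kappa> s"
  define Cm where "Cm = cosh (\<alpha> * R) - 1"
  define K where "K = real n * \<alpha> / (2 * pi * Cm)"
  have a0: "\<alpha> > 0" using a by simp
  note H = hyp_facts[OF nu nb a0 s, folded R_def u_def]
  have "\<nu> * exp 2 > 0" using nu by simp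
  then have n0: "real n > 0" using nb by linarith
  have u0: "u > 0" unfolding u_def using nu n0 by simp
  have nu: "real n * u = \<nu>" unfolding u_def using n0 by simp
  have R0: "R > 0" using H(1) by simp
  note PB = phiRR_bounds[OF R0, unfolded H(2)]
  have ps: "phi_s \<alpha> R s = s powr (1/(2*\<alpha>)) * u" by (rule H(4))
  have ks: "\<kappa> * s powr (1/(2*\<alpha>)) \<ge> 0" using k by simp
  have Q1: "Q \<ge> 1" unfolding Q_def using ks by simp
  have t': "t = phi R R + \<kappa> * (s powr (1/(2*\<alpha>)) * u)" unfolding tdef R_def[symmetric] ps ..
  have kpu: "\<kappa> * (s powr (1/(2*\<alpha>)) * u) = u * (\<kappa> * s powr (1/(2*\<alpha>)))" by simp
  have tlow: "u * Q \<le> t" unfolding t' kpu Q_def using PB(1) by (simp add: algebra_simps)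
  have uX: "0 \<le> u * (\<kappa> * s powr (1/(2*\<alpha>)))" using ks u0 by simp
  have QQ: "3 * u * Q = 3 * u + 3 * (u * (\<kappa> * s powr (1/(2*\<alpha>))))" unfolding Q_def by (simp add: algebra_simps)
  have tup: "t \<le> 3 * u * Q" unfolding QQ unfolding t' kpu using PB(2) uX by linarith
  have tR: "phi R R \<le> t" unfolding t' kpu using uX by linarith
  have "u * Q > 0" using u0 Q1 by simp
  then have t0: "t > 0" using tlow by linarith
  note EP = eps_props[OF a(1) k s, folded e_def Q_def]
  have e0: "0 < e" "e \<le> 1" using EP by auto
  show "\<nu> * (1 + \<kappa> * s powr (1/(2*\<alpha>))) \<le> real n * t"
    using tlow n0 unfolding Q_def[symmetric] nu[symmetric] by (simp add: mult.assoc)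
  show "real n * t \<le> 3 * \<nu> * (1 + \<kappa> * s powr (1/(2*\<alpha>)))"
    using tup n0 unfolding Q_def[symmetric] nu[symmetric] by (simp add: algebra_simps)
  have eaR: "exp (\<alpha> * R) \<ge> 4"
  proof -
    have "\<alpha> * R \<ge> 1/2 * 4" using a H(1) by (intro mult_mono) auto
    then have "\<alpha> * R \<ge> 2" by simp
    then have "exp 2 \<le> exp (\<alpha> * R)" by simp
    moreover have "5 \<le> exp (2::real)" using exp_lower_Taylor_quadratic[of 2] by simp
    ultimately show ?thesis by linarith
  qed
  have Cm: "u powr (-(2*\<alpha>)) / 4 \<le> Cm" unfolding H(3) Cm_def cosh_def real_scaleR_def
    using eaR by (simp add: field_simps) (use exp_gt_zero[of "-(R*\<alpha>)"] in linarith)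
  have "u powr (-(2*\<alpha>)) / 4 > 0" using u0 by simp
  then have Cm0: "Cm > 0" using Cm by linarith
  have K0: "K \<ge> 0" unfolding K_def using n0 a0 Cm0 by simp
  have mu: "mu_meas \<nu> \<alpha> n = density lborel (dens K \<alpha> R)" unfolding mu_meas_eq K_def Cm_def R_def ..
  have D: "D_s \<nu> \<alpha> n \<kappa> s = ({0..R} \<times> {-t..t}) \<union> Bset \<alpha> R e t"
    unfolding R_def by (rule D_decomp[OF H(1)[unfolded R_def, THEN less_trans[OF zero_less_numeral]] a0 e0 e_def[symmetric] tdef tR[unfolded R_def] t2])
  define M where "M = density lborel (dens K \<alpha> R)"
  have A_sets: "{0..R} \<times> {-t..t} \<in> sets M" unfolding M_def sets_density
    using pair_measureI[of "{0..R}" lborel "{-t..t}" lborel] unfolding lborel_prod by simp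
  have B_sets: "Bset \<alpha> R e t \<in> sets M" unfolding M_def sets_density using Bset_meas unfolding lborel_prod .
  have pi2: "t < pi" using t2 pi_gt_zero by linarith
  have mA: "emeasure M ({0..R} \<times> {-t..t}) = ennreal (real n * t / pi)"
  proof -
    have "emeasure M ({0..R} \<times> {-t..t}) = ennreal (K * (cosh (\<alpha> * R) - 1) / \<alpha> * (2 * t))"
      unfolding M_def by (rule measA) (use t0 pi2 R0 a0 K0 in auto)
    also have "K * (cosh (\<alpha> * R) - 1) / \<alpha> * (2 * t) = real n * t / pi"
      unfolding K_def Cm_def[symmetric] using Cm0 a0 by (simp add: field_simps)
    finally show ?thesis .
  qed
  define U where "U = 2 * ((K / \<alpha> * 2 * 8 powr \<alpha> / e) * t powr (1 - 2*\<alpha>) / (2*\<alpha> - 1))"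
  have mB: "emeasure M (Bset \<alpha> R e t) \<le> ennreal U"
    unfolding M_def U_def by (rule measB[OF R0 a(1) e0 e_def[symmetric] K0 tR t0 t2])
  have UB: "U \<le> 64 * real n * t / (pi * (2*\<alpha> - 1))"
    unfolding U_def K_def by (rule U_bound[OF u0 Q1 tlow a e0(1) EP(3) Cm]) (use n0 in simp)
  have U0: "0 \<le> U" unfolding U_def using K0 e0 a0 a by simp
  have Dsets: "D_s \<nu> \<alpha> n \<kappa> s \<in> sets M" unfolding D using A_sets B_sets by simp
  have "emeasure M (D_s \<nu> \<alpha> n \<kappa> s) \<le> emeasure M ({0..R} \<times> {-t..t}) + emeasure M (Bset \<alpha> R e t)"
    unfolding D by (rule emeasure_subadditive[OF A_sets B_sets])
  also have "\<dots> \<le> ennreal (real n * t / pi) + ennreal U" unfolding mA using mB by (rule add_left_mono)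
  also have "\<dots> = ennreal (real n * t / pi + U)" using U0 t0 n0 by (simp add: ennreal_plus)
  finally have up: "emeasure M (D_s \<nu> \<alpha> n \<kappa> s) \<le> ennreal (real n * t / pi + U)" .
  have fin: "emeasure M (D_s \<nu> \<alpha> n \<kappa> s) < top" using up by (simp add: le_less_trans)
  have low: "ennreal (real n * t / pi) \<le> emeasure M (D_s \<nu> \<alpha> n \<kappa> s)"
    unfolding mA[symmetric] using Dsets unfolding D by (intro emeasure_mono) auto
  show "real n * t / pi \<le> measure (mu_meas \<nu> \<alpha> n) (D_s \<nu> \<alpha> n \<kappa> s)"
    unfolding mu M_def[symmetric] measure_def
    using enn2real_mono[OF low fin] t0 n0 by simp
  have V0: "0 \<le> real n * t / pi + U" using U0 t0 n0 by simp
  have "measure M (D_s \<nu> \<alpha> n \<kappa> s) \<le> enn2real (ennreal (real n * t / pi + U))"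
    unfolding measure_def by (rule enn2real_mono[OF up]) simp
  also have "\<dots> = real n * t / pi + U" using V0 by (rule enn2real_ennreal)
  finally have "measure M (D_s \<nu> \<alpha> n \<kappa> s) \<le> real n * t / pi + U" .
  then show "measure (mu_meas \<nu> \<alpha> n) (D_s \<nu> \<alpha> n \<kappa> s) \<le> real n * t / pi + 64 * real n * t / (pi * (2*\<alpha> - 1))"
    unfolding mu M_def[symmetric] using UB by linarith
qed

theorem mainTheorem8:
  fixes \<nu> \<alpha> :: real and \<kappa> s :: "nat \<Rightarrow> real"
  assumes "\<nu> > 0" and "1 / 2 < \<alpha>" and "\<alpha> \<le> 1"
    and "\<forall>n. s n > 0"
    and "eventually (\<lambda>n. \<kappa> n \<ge> 1) at_top"
    and "eventually (\<lambda>n. phi (hypR \<nu> n) (hypR \<nu> n) + \<kappa> n * phi_s \<alpha> (hypR \<nu> n) (s n) \<le> pi / 2) at_top"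
  shows "(\<lambda>n. measure (mu_meas \<nu> \<alpha> n) (D_s \<nu> \<alpha> n (\<kappa> n) (s n)))
           \<in> \<Theta>(\<lambda>n. real n * (phi (hypR \<nu> n) (hypR \<nu> n) + \<kappa> n * phi_s \<alpha> (hypR \<nu> n) (s n))) \<and>
         (\<lambda>n. measure (mu_meas \<nu> \<alpha> n) (D_s \<nu> \<alpha> n (\<kappa> n) (s n)))
           \<in> \<Theta>(\<lambda>n. 1 + \<kappa> n * s n powr (1 / (2 * \<alpha>)))"
proof -
  note nu = assms(1) and a = assms(2,3) and s = assms(4)
  define F where "F n = measure (mu_meas \<nu> \<alpha> n) (D_s \<nu> \<alpha> n (\<kappa> n) (s n))" for n
  define G1 where "G1 n = real n * (phi (hypR \<nu> n) (hypR \<nu> n) + \<kappa> n * phi_s \<alpha> (hypR \<nu> n) (s n))" for n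
  define G2 where "G2 n = 1 + \<kappa> n * s n powr (1 / (2 * \<alpha>))" for n
  define c where "c = 1 / pi + 64 / (pi * (2*\<alpha> - 1))"
  have cx: "c * x = x / pi + 64 * x / (pi * (2*\<alpha> - 1))" for x
    unfolding c_def by (simp add: algebra_simps)
  have c0: "c > 0" unfolding c_def using a by (simp add: add_pos_pos)
  have ev_n: "eventually (\<lambda>n. real n > \<nu> * exp 2) at_top"
  proof -
    have "eventually (\<lambda>n. n \<ge> nat \<lceil>\<nu> * exp 2\<rceil> + 1) at_top" by (rule eventually_ge_at_top)
    then show ?thesis by eventually_elim linarith
  qed
  have ev: "eventually (\<lambda>n. F n \<ge> G1 n / pi \<and> F n \<le> c * G1 n \<and> \<nu> * G2 n \<le> G1 n \<and> G1 n \<le> 3 * \<nu> * G2 n \<and> G2 n \<ge> 1) at_top"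
    using ev_n assms(5,6)
  proof eventually_elim
    case (elim n)
    note P = per_n[OF nu a s[rule_format] elim(2) elim(1) refl elim(3)]
    have "G2 n \<ge> 1" unfolding G2_def using elim(2) s by simp
    moreover have "F n \<ge> G1 n / pi" using P(1) unfolding F_def G1_def by simp
    moreover have "F n \<le> c * G1 n" using P(2) unfolding F_def G1_def cx by simp
    moreover have "\<nu> * G2 n \<le> G1 n" using P(3) unfolding G1_def G2_def by simp
    moreover have "G1 n \<le> 3 * \<nu> * G2 n" using P(4) unfolding G1_def G2_def by simp
    ultimately show ?case by blast
  qed
  have norm: "eventually (\<lambda>n. (1/pi) * norm (G1 n) \<le> norm (F n) \<and> norm (F n) \<le> c * norm (G1 n)) at_top"
    using ev
  proof eventually_elim
    case (elim n)
    then have g1: "G1 n > 0" using nu by (smt (verit) mult_pos_pos)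
    then have "G1 n / pi > 0" by simp
    then have "F n > 0" using elim by linarith
    then show ?case using elim g1 by simp
  qed
  have norm2: "eventually (\<lambda>n. (\<nu>/pi) * norm (G2 n) \<le> norm (F n) \<and> norm (F n) \<le> (3 * \<nu> * c) * norm (G2 n)) at_top"
    using ev
  proof eventually_elim
    case (elim n)
    have g1: "G1 n > 0" using elim nu by (smt (verit) mult_pos_pos)
    have g2: "G2 n > 0" using elim by linarith
    have "G1 n / pi > 0" using g1 by simp
    then have F0: "F n > 0" using elim by linarith
    have l1: "\<nu> / pi * G2 n \<le> G1 n / pi" using elim by (simp add: divide_right_mono)
    have l2: "c * G1 n \<le> c * (3 * \<nu> * G2 n)" using elim c0 by (intro mult_left_mono) auto
    have "norm (F n) = F n" "norm (G2 n) = G2 n" using F0 g2 by auto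
    moreover have "\<nu> / pi * G2 n \<le> F n" using l1 elim by linarith
    moreover have "F n \<le> 3 * \<nu> * c * G2 n" using l2 elim by (simp add: mult_ac)
    ultimately show ?case by simp
  qed
  have "F \<in> \<Theta>(G1)" by (rule bigthetaI'[OF _ c0 norm]) simp
  moreover have "F \<in> \<Theta>(G2)" by (rule bigthetaI'[OF _ _ norm2]) (use nu c0 in simp)+
  ultimately show ?thesis unfolding F_def G1_def G2_def by simp
qed

end
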